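(* Let $n$ and $m$ be integers with $n\geq 5$ and $m\geq 5$. Let $G\in T_{n,m}$, and let $v$ be a vertex of $G$ of degree $1$ whose unique neighbor is the terminal $s$. If $G-sv$ is complete, then there exists $H\in T_{n,m}$ that is $3$-stronger than $G$.
   Context: All graphs are finite, simple and undirected. A two-terminal graph is a graph $G$ together with two distinguished vertices $s,t$ (the terminals). $T_{n,m}$ denotes the set of all pairwise nonisomorphic (with isomorphisms preserving the set of terminals) two-terminal graphs with $n$ vertices and $m$ edges. A two-terminal graph is called complete if the connected component containing both terminals is a complete graph. $G-sv$ is the two-terminal graph obtained from $G$ by deleting the edge $sv$. For a positive integer $d$, a $d$-pathset of a two-terminal graph $G$ is a spanning subgraph of $G$ containing a path of length (number of edges) at most $d$ joining $s$ and $t$; $N_i^d(G)$ is the number of $d$-pathsets of $G$ with exactly $i$ edges. For $G,H\in T_{n,m}$, $H$ is $d$-stronger than $G$ if $N_i^d(H)\geq N_i^d(G)$ for every $i\in\{1,\ldots,m\}$ and $N_j^d(H)>N_j^d(G)$ for some $j\in\{1,\ldots,m\}$. *)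

theory Defs
  imports Main
begin

definition tt_graph :: "'a set \<Rightarrow> 'a set set \<Rightarrow> 'a \<Rightarrow> 'a \<Rightarrow> bool" where
  "tt_graph V E s t \<longleftrightarrow> finite V \<and> s \<in> V \<and> t \<in> V \<and> s \<noteq> t \<and>
     (\<forall>e\<in>E. \<exists>x y. e = {x, y} \<and> x \<noteq> y \<and> x \<in> V \<and> y \<in> V)"

definition in_T :: "nat \<Rightarrow> nat \<Rightarrow> 'a set \<Rightarrow> 'a set set \<Rightarrow> 'a \<Rightarrow> 'a \<Rightarrow> bool" where
  "in_T n m V E s t \<longleftrightarrow> tt_graph V E s t \<and> card V = n \<and> card E = m"

definition is_path :: "'a set set \<Rightarrow> 'a \<Rightarrow> 'a \<Rightarrow> 'a list \<Rightarrow> bool" where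
  "is_path F a b xs \<longleftrightarrow> xs \<noteq> [] \<and> distinct xs \<and> hd xs = a \<and> last xs = b \<and>
     (\<forall>i. Suc i < length xs \<longrightarrow> {xs ! i, xs ! Suc i} \<in> F)"

definition d_pathset :: "nat \<Rightarrow> 'a set set \<Rightarrow> 'a \<Rightarrow> 'a \<Rightarrow> 'a set set \<Rightarrow> bool" where
  "d_pathset d E s t F \<longleftrightarrow> F \<subseteq> E \<and> (\<exists>xs. is_path F s t xs \<and> length xs - 1 \<le> d)"

definition N :: "nat \<Rightarrow> nat \<Rightarrow> 'a set set \<Rightarrow> 'a \<Rightarrow> 'a \<Rightarrow> nat" where
  "N d i E s t = card {F. d_pathset d E s t F \<and> card F = i}"

definition d_stronger :: "nat \<Rightarrow> nat \<Rightarrow> 'b set set \<Rightarrow> 'b \<Rightarrow> 'b \<Rightarrow> 'a set set \<Rightarrow> 'a \<Rightarrow> 'a \<Rightarrow> bool" where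
  "d_stronger d m EH sH tH EG sG tG \<longleftrightarrow>
     (\<forall>i\<in>{1..m}. N d i EH sH tH \<ge> N d i EG sG tG) \<and>
     (\<exists>j\<in>{1..m}. N d j EH sH tH > N d j EG sG tG)"

definition adj :: "'a set set \<Rightarrow> 'a \<Rightarrow> 'a \<Rightarrow> bool" where
  "adj E x y \<longleftrightarrow> {x, y} \<in> E"

definition complete_tt :: "'a set \<Rightarrow> 'a set set \<Rightarrow> 'a \<Rightarrow> 'a \<Rightarrow> bool" where
  "complete_tt V E s t \<longleftrightarrow>
     (let C = {x \<in> V. (adj E)\<^sup>*\<^sup>* s x} in
        t \<in> C \<and> (\<forall>x\<in>C. \<forall>y\<in>C. x \<noteq> y \<longrightarrow> {x, y} \<in> E))"

definition degree :: "'a set set \<Rightarrow> 'a \<Rightarrow> nat" where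
  "degree E v = card {u. {u, v} \<in> E}"

end

theory Submission
  imports Defs
begin

definition P3 :: "'a set set \<Rightarrow> 'a \<Rightarrow> 'a \<Rightarrow> bool" where
  "P3 F s t \<longleftrightarrow> {s,t} \<in> F \<or> (\<exists>y. y\<noteq>s \<and> y\<noteq>t \<and> {s,y}\<in>F \<and> {y,t}\<in>F) \<or>
     (\<exists>y z. y\<noteq>s \<and> y\<noteq>t \<and> z\<noteq>s \<and> z\<noteq>t \<and> y\<noteq>z \<and> {s,y}\<in>F \<and> {y,z}\<in>F \<and> {z,t}\<in>F)"

lemma path_P3:
  assumes "s \<noteq> t"
  shows "(\<exists>xs. is_path F s t xs \<and> length xs - 1 \<le> 3) \<longleftrightarrow> P3 F s t"
proof
  assume "\<exists>xs. is_path F s t xs \<and> length xs - 1 \<le> 3"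
  then obtain xs where p: "is_path F s t xs" and l: "length xs - 1 \<le> 3" by blast
  have ne: "xs \<noteq> []" and d: "distinct xs" and h: "hd xs = s" and la: "last xs = t"
    and ed: "\<And>i. Suc i < length xs \<Longrightarrow> {xs ! i, xs ! Suc i} \<in> F"
    using p unfolding is_path_def by auto
  have "length xs \<noteq> 1"
  proof
    assume "length xs = 1"
    then obtain a where "xs = [a]" by (auto simp: length_Suc_conv)
    with h la assms show False by simp
  qed
  moreover have "length xs > 0" using ne by simp
  ultimately have "length xs = 2 \<or> length xs = 3 \<or> length xs = 4" using l by arith
  moreover
  { assume "length xs = 2"
    then obtain a b where xs: "xs = [a,b]" by (auto simp: numeral_eq_Suc length_Suc_conv)
    have "a = s" "b = t" using h la unfolding xs by simp_all
    moreover have "{a,b} \<in> F" using ed[of 0] unfolding xs by simp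
    ultimately have "P3 F s t" unfolding P3_def by blast }
  moreover
  { assume "length xs = 3"
    then obtain a b c where xs: "xs = [a,b,c]" by (auto simp: numeral_eq_Suc length_Suc_conv)
    have "a = s" "c = t" using h la unfolding xs by simp_all
    moreover have "{a,b} \<in> F" "{b,c} \<in> F" using ed[of 0] ed[of 1] unfolding xs by simp_all
    moreover have "b \<noteq> a" "b \<noteq> c" using d unfolding xs by auto
    ultimately have "P3 F s t" unfolding P3_def by blast }
  moreover
  { assume "length xs = 4"
    then obtain a b c e where xs: "xs = [a,b,c,e]" by (auto simp: numeral_eq_Suc length_Suc_conv)
    have "a = s" "e = t" using h la unfolding xs by simp_all
    moreover have "{a,b} \<in> F" "{b,c} \<in> F" "{c,e} \<in> F"
      using ed[of 0] ed[of 1] ed[of 2] unfolding xs by (simp_all add: numeral_eq_Suc)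
    moreover have "b \<noteq> a" "b \<noteq> e" "c \<noteq> a" "c \<noteq> e" "b \<noteq> c" using d unfolding xs by auto
    ultimately have "P3 F s t" unfolding P3_def by blast }
  ultimately show "P3 F s t" by blast
next
  assume "P3 F s t"
  then consider "{s,t} \<in> F" | y where "y\<noteq>s" "y\<noteq>t" "{s,y}\<in>F" "{y,t}\<in>F"
    | y z where "y\<noteq>s" "y\<noteq>t" "z\<noteq>s" "z\<noteq>t" "y\<noteq>z" "{s,y}\<in>F" "{y,z}\<in>F" "{z,t}\<in>F"
    unfolding P3_def by blast
  then show "\<exists>xs. is_path F s t xs \<and> length xs - 1 \<le> 3"
  proof cases
    case 1
    then show ?thesis using assms by (intro exI[of _ "[s,t]"]) (auto simp: is_path_def less_Suc_eq)
  next
    case 2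
    have "is_path F s t [s,y,t]" unfolding is_path_def
    proof (intro conjI allI impI)
      fix i assume "Suc i < length [s,y,t]"
      then have "i = 0 \<or> i = 1" by auto
      then show "{[s,y,t] ! i, [s,y,t] ! Suc i} \<in> F" using 2 by auto
    qed (use 2 assms in auto)
    then show ?thesis by (intro exI[of _ "[s,y,t]"]) simp
  next
    case 3
    have "is_path F s t [s,y,z,t]" unfolding is_path_def
    proof (intro conjI allI impI)
      fix i assume "Suc i < length [s,y,z,t]"
      then have "i = 0 \<or> i = 1 \<or> i = 2" by auto
      then show "{[s,y,z,t] ! i, [s,y,z,t] ! Suc i} \<in> F" using 3 by (auto simp: numeral_eq_Suc)
    qed (use 3 assms in auto)
    then show ?thesis by (intro exI[of _ "[s,y,z,t]"]) simp
  qed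
qed

lemma dps_P3: "s \<noteq> t \<Longrightarrow> d_pathset 3 E s t F \<longleftrightarrow> F \<subseteq> E \<and> P3 F s t"
  unfolding d_pathset_def using path_P3[of s t F] by simp

lemma P3_mono: "P3 A s t \<Longrightarrow> A \<subseteq> B \<Longrightarrow> P3 B s t"
  unfolding P3_def by blast


lemma P3I1: "{s,t} \<in> G \<Longrightarrow> P3 G s t" unfolding P3_def by blast
lemma P3I2: "y\<noteq>s \<Longrightarrow> y\<noteq>t \<Longrightarrow> {s,y}\<in>G \<Longrightarrow> {y,t}\<in>G \<Longrightarrow> P3 G s t" unfolding P3_def by blast
lemma P3I3: "y\<noteq>s \<Longrightarrow> y\<noteq>t \<Longrightarrow> z\<noteq>s \<Longrightarrow> z\<noteq>t \<Longrightarrow> y\<noteq>z \<Longrightarrow> {s,y}\<in>G \<Longrightarrow> {y,z}\<in>G \<Longrightarrow> {z,t}\<in>G \<Longrightarrow> P3 G s t"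
  unfolding P3_def by blast
lemma P3E:
  assumes "P3 G s t"
  obtains "{s,t} \<in> G" | y where "y\<noteq>s" "y\<noteq>t" "{s,y}\<in>G" "{y,t}\<in>G"
    | y z where "y\<noteq>s" "y\<noteq>t" "z\<noteq>s" "z\<noteq>t" "y\<noteq>z" "{s,y}\<in>G" "{y,z}\<in>G" "{z,t}\<in>G"
  using assms unfolding P3_def by blast

lemma sv_irrel:
  assumes "\<forall>u. {u,v} \<in> F \<longrightarrow> u = s" "v \<noteq> t" "v \<noteq> s" "P3 F s t" "s \<noteq> t"
  shows "P3 (F - {{s,v}}) s t"
proof -
  have t1: "{s,t} \<noteq> {s,v}" using assms(2) by (auto simp: doubleton_eq_iff)
  have t2: "\<And>y. {y,t} \<noteq> {s,v}" using assms(2,3,5) by (auto simp: doubleton_eq_iff)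
  have t3: "y \<noteq> v" if "{y,t} \<in> F" for y
  proof
    assume "y = v"
    then have "{t,v} \<in> F" using that by (simp add: insert_commute)
    then show False using assms(1,5) by blast
  qed
  have t4: "y \<noteq> v" if "{y,z} \<in> F" "z \<noteq> s" for y z
  proof
    assume "y = v"
    then have "{z,v} \<in> F" using that by (simp add: insert_commute)
    then show False using assms(1) that(2) by blast
  qed
  have t5: "\<And>y. y \<noteq> v \<Longrightarrow> {s,y} \<noteq> {s,v}" by (auto simp: doubleton_eq_iff)
  have t6: "\<And>y z. y \<noteq> s \<Longrightarrow> z \<noteq> s \<Longrightarrow> {y,z} \<noteq> {s,v}" by (auto simp: doubleton_eq_iff)
  from assms(4) show ?thesis
  proof (cases rule: P3E)
    case 1 then show ?thesis using t1 by (intro P3I1) simp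
  next
    case (2 y) then show ?thesis using t2 t3 t5 by (intro P3I2[of y]) simp_all
  next
    case (3 y z) then show ?thesis using t2 t4 t5 t6 by (intro P3I3[of y s t z]) simp_all
  qed
qed

lemma P3_ins:
  assumes "w \<noteq> s" "w \<noteq> t" "x \<noteq> s" "x \<noteq> t" "P3 (insert {w,x} A) s t"
  shows "P3 A s t \<or> ({s,w} \<in> A \<and> {x,t} \<in> A) \<or> ({s,x} \<in> A \<and> {w,t} \<in> A)"
proof -
  have a: "{s,y} \<noteq> {w,x}" for y using assms by (auto simp: doubleton_eq_iff)
  have b: "{y,t} \<noteq> {w,x}" for y using assms by (auto simp: doubleton_eq_iff)
  have c: "{y,z} = {w,x} \<Longrightarrow> (y = w \<and> z = x) \<or> (y = x \<and> z = w)" for y z by (auto simp: doubleton_eq_iff)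
  from assms(5) show ?thesis
  proof (cases rule: P3E)
    case 1
    then have "{s,t} \<in> A" using a by auto
    then show ?thesis by (intro disjI1 P3I1)
  next
    case (2 y)
    then have "{s,y} \<in> A" "{y,t} \<in> A" using a b by auto
    then show ?thesis using 2 by (intro disjI1 P3I2[of y]) simp_all
  next
    case (3 y z)
    then have h: "{s,y} \<in> A" "{z,t} \<in> A" using a b by auto
    show ?thesis
    proof (cases "{y,z} = {w,x}")
      case True
      then show ?thesis using c[OF True] h by auto
    next
      case False
      then have "{y,z} \<in> A" using 3 by auto
      then show ?thesis using 3 h by (intro disjI1 P3I3[of y s t z]) simp_all
    qed
  qed
qed

lemma P3_restrict:
  assumes "s \<in> C" "t \<in> C" "\<And>y z. {y,z} \<in> A \<Longrightarrow> y \<in> C \<Longrightarrow> z \<in> C" "P3 A s t"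
  shows "P3 {g\<in>A. g \<subseteq> C} s t"
  using assms(4)
proof (cases rule: P3E)
  case 1 then show ?thesis using assms(1,2) by (intro P3I1) simp
next
  case (2 y)
  then have "y \<in> C" using assms(1,3) by blast
  then show ?thesis using 2 assms(1,2) by (intro P3I2[of y]) simp_all
next
  case (3 y z)
  then have "y \<in> C" using assms(1,3) by blast
  then have "z \<in> C" using 3 assms(3) by blast
  then show ?thesis using 3 assms(1,2) \<open>y \<in> C\<close> by (intro P3I3[of y s t z]) simp_all
qed

lemma inj_stronger:
  assumes st: "s \<noteq> t" and fin: "finite EH"
    and mp: "\<And>F. F \<subseteq> EG \<Longrightarrow> P3 F s t \<Longrightarrow> \<Phi> F \<subseteq> EH \<and> P3 (\<Phi> F) s t \<and> card (\<Phi> F) = card F"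
    and inj: "inj_on \<Phi> {F. F \<subseteq> EG \<and> P3 F s t}"
    and X: "X \<subseteq> EH" "P3 X s t" "X \<notin> \<Phi> ` {F. F \<subseteq> EG \<and> P3 F s t}" "card X \<in> {1..m}"
  shows "d_stronger 3 m EH s t EG s t"
proof -
  define A where "A i = {F. F \<subseteq> EG \<and> P3 F s t \<and> card F = i}" for i
  define B where "B i = {F. F \<subseteq> EH \<and> P3 F s t \<and> card F = i}" for i
  have NA: "N 3 i EG s t = card (A i)" for i unfolding N_def A_def using dps_P3[OF st] by simp
  have NB: "N 3 i EH s t = card (B i)" for i unfolding N_def B_def using dps_P3[OF st] by simp
  have finB: "finite (B i)" for i
    by (rule finite_subset[of _ "Pow EH"]) (auto simp: B_def fin)
  have sub: "\<Phi> ` A i \<subseteq> B i" for i using mp unfolding A_def B_def by auto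
  have injA: "inj_on \<Phi> (A i)" for i by (rule inj_on_subset[OF inj]) (auto simp: A_def)
  have le: "card (A i) \<le> card (B i)" for i
    using card_inj_on_le[OF injA sub finB] .
  have xin: "X \<in> B (card X)" using X(1,2) by (simp add: B_def)
  have "A (card X) \<subseteq> {F. F \<subseteq> EG \<and> P3 F s t}" by (auto simp: A_def)
  then have xout: "X \<notin> \<Phi> ` A (card X)" using X(3) by blast
  have "\<Phi> ` A (card X) \<subset> B (card X)"
    using sub[of "card X"] xin xout by (metis psubsetI)
  then have "card (\<Phi> ` A (card X)) < card (B (card X))" using finB psubset_card_mono by metis
  then have lt: "card (A (card X)) < card (B (card X))" using card_image[OF injA] by simp
  show ?thesis unfolding d_stronger_def NA NB using le lt X(4) by (intro conjI ballI bexI[of _ "card X"]) simp_all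
qed


lemma P3_t: "P3 G s t \<Longrightarrow> \<exists>y. {y,t} \<in> G"
  by (erule P3E) blast+

lemma card_swap:
  assumes "finite F" "e \<in> F" "f \<notin> F"
  shows "card (insert f (F - {e})) = card F"
proof -
  have "card (F - {e}) = card F - 1" using assms by simp
  moreover have "card F \<ge> 1" using assms by (metis One_nat_def Suc_leI card_gt_0_iff empty_iff)
  ultimately show ?thesis using assms by simp
qed

lemma case1:
  assumes st: "s \<noteq> t" and vs: "v \<noteq> s" and vt: "v \<noteq> t" and fin: "finite E"
    and eE: "e \<in> E" and svE: "{s,v} \<in> E" and esv: "e \<noteq> {s,v}" and fE: "{v,t} \<notin> E"
    and irr: "\<And>F. F \<subseteq> E \<Longrightarrow> P3 F s t \<Longrightarrow> P3 (F - {e}) s t"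
    and nb: "\<And>u. {u,v} \<in> E \<Longrightarrow> u = s"
    and m2: "2 \<le> card E"
  shows "d_stronger 3 (card E) (insert {v,t} (E - {e})) s t E s t"
proof -
  define f where "f = {v,t}"
  define \<Phi> where "\<Phi> F = (if e \<in> F then insert f (F - {e}) else F)" for F
  define \<Psi> where "\<Psi> R = (if f \<in> R then insert e (R - {f}) else R)" for R
  have fE': "f \<notin> E" using fE f_def by simp
  have inv: "\<Psi> (\<Phi> F) = F" if "F \<subseteq> E" for F
    using that fE' eE unfolding \<Phi>_def \<Psi>_def by (auto simp: insert_absorb)
  have sv_ne_f: "{s,v} \<noteq> f" using st vt vs unfolding f_def by (auto simp: doubleton_eq_iff)
  have noP3: "\<not> P3 G s t" if "G \<subseteq> {{s,v}, e}" for G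
  proof
    assume "P3 G s t"
    note h1 = this
    have h2: "G \<subseteq> E" using that eE svE by auto
    have h3: "P3 (G - {e}) s t" using irr[OF h2 h1] .
    have h4: "G - {e} \<subseteq> {{s,v}}" using that by auto
    have "P3 {{s,v}} s t" using P3_mono[OF h3 h4] .
    then obtain y where "{y,t} \<in> {{s,v}}" using P3_t by metis
    then have "{y,t} = {s,v}" by simp
    then show False using st vt by (auto simp: doubleton_eq_iff)
  qed
  show ?thesis unfolding f_def[symmetric]
  proof (rule inj_stronger[where \<Phi> = \<Phi> and X = "{{s,v}, f}"])
    show "s \<noteq> t" by fact
    show "finite (insert f (E - {e}))" using fin by simp
    show "\<Phi> F \<subseteq> insert f (E - {e}) \<and> P3 (\<Phi> F) s t \<and> card (\<Phi> F) = card F"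
      if "F \<subseteq> E" "P3 F s t" for F
    proof (cases "e \<in> F")
      case True
      have "P3 (F - {e}) s t" using irr[OF that] .
      have eq: "\<Phi> F = insert f (F - {e})" using True by (simp add: \<Phi>_def)
      have p: "P3 (\<Phi> F) s t" unfolding eq by (rule P3_mono[OF \<open>P3 (F - {e}) s t\<close>]) auto
      have ff: "finite F" using fin that(1) by (rule finite_subset[rotated])
      have fF: "f \<notin> F" using fE' that(1) by auto
      have c: "card (\<Phi> F) = card F" unfolding eq using card_swap[OF ff True fF] .
      have "\<Phi> F \<subseteq> insert f (E - {e})" unfolding eq using that(1) by auto
      then show ?thesis using p c by simp
    next
      case False
      then show ?thesis unfolding \<Phi>_def using that by auto
    qed
    show "inj_on \<Phi> {F. F \<subseteq> E \<and> P3 F s t}" by (rule inj_on_inverseI[where g = \<Psi>]) (use inv in auto)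
    show "{{s, v}, f} \<subseteq> insert f (E - {e})" using svE esv by auto
    show "P3 {{s, v}, f} s t" unfolding f_def using vs vt by (intro P3I2[of v]) auto
    show "{{s, v}, f} \<notin> \<Phi> ` {F. F \<subseteq> E \<and> P3 F s t}"
    proof
      assume "{{s, v}, f} \<in> \<Phi> ` {F. F \<subseteq> E \<and> P3 F s t}"
      then obtain F where F: "F \<subseteq> E" "P3 F s t" "\<Phi> F = {{s, v}, f}" by blast
      have "F = \<Psi> {{s, v}, f}" using inv[OF F(1)] F(3) by simp
      also have "\<dots> = {e, {s,v}}" unfolding \<Psi>_def using sv_ne_f by auto
      finally show False using noP3[of F] F(2) by auto
    qed
    show "card {{s, v}, f} \<in> {1..card E}" using sv_ne_f m2 by simp
  qed
qed


lemma case2: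
  assumes st: "s \<noteq> t" and vs: "v \<noteq> s" and vt: "v \<noteq> t" and fin: "finite E"
    and svE: "{s,v} \<in> E" and fE: "{v,t} \<notin> E"
    and nb: "\<And>u. {u,v} \<in> E \<Longrightarrow> u = s"
    and wx: "w \<noteq> x" "w \<noteq> s" "w \<noteq> t" "w \<noteq> v" "x \<noteq> s" "x \<noteq> t" "x \<noteq> v"
    and E1: "{w,x} \<in> E" "{s,w} \<in> E" "{x,t} \<in> E" "{s,x} \<in> E" "{w,t} \<in> E"
    and m2: "2 \<le> card E"
  shows "d_stronger 3 (card E) (insert {v,t} (E - {{w,x}})) s t E s t"
proof -
  define e where "e = {w,x}"
  define f where "f = {v,t}"
  define sv where "sv = {s,v}"
  define sw where "sw = {s,w}"
  define sx where "sx = {s,x}"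
  define xt where "xt = {x,t}"
  define wt where "wt = {w,t}"
  note defs = e_def f_def sv_def sw_def sx_def xt_def wt_def
  have d: "e \<noteq> f" "e \<noteq> sv" "sv \<noteq> f" "sw \<noteq> e" "sx \<noteq> e" "xt \<noteq> e" "wt \<noteq> e"
    "sw \<noteq> sv" "sx \<noteq> sv" "xt \<noteq> sv" "wt \<noteq> sv" "xt \<noteq> f" "wt \<noteq> f" "sw \<noteq> sx"
    "xt \<noteq> sw" "xt \<noteq> sx" "wt \<noteq> sw" "wt \<noteq> sx" "sw \<noteq> f" "sx \<noteq> f"
    unfolding defs using st vs vt wx by (auto simp: doubleton_eq_iff)
  have fE': "f \<notin> E" using fE f_def by simp
  have eE: "e \<in> E" using E1 e_def by simp
  have svE': "sv \<in> E" using svE sv_def by simp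
  define g where "g F = (if sw \<in> F then sw else sx)" for F :: "'a set set"
  define \<Phi> where "\<Phi> F = (if e \<notin> F then F else if P3 (F - {e}) s t \<or> sv \<in> F then insert f (F - {e})
     else insert sv (insert f (F - {e} - {g F})))" for F
  define \<Psi> where "\<Psi> R = (if f \<notin> R then R else if P3 (insert e (R - {f})) s t then insert e (R - {f})
     else insert e (insert (if xt \<in> R then sw else sx) (R - {sv, f})))" for R
  have Psv: "P3 G s t" if "sv \<in> G" "f \<in> G" for G
    using that vs vt unfolding sv_def f_def by (intro P3I2[of v]) auto
  have br3: "g F \<in> F \<and> \<not> P3 (insert sv (F - {g F})) s t \<and> (xt \<in> F \<longleftrightarrow> g F = sw) \<and> (xt \<in> F \<or> wt \<in> F)"
    if F: "F \<subseteq> E" "P3 F s t" "e \<in> F" "\<not> P3 (F - {e}) s t" "sv \<notin> F" for F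
  proof -
    have ins: "insert e (F - {e}) = F" using F(3) by auto
    have "P3 (insert {w,x} (F - {e})) s t" using F(2) ins e_def by simp
    from P3_ins[OF wx(2,3,5,6) this] F(4)
    have pairs: "(sw \<in> F \<and> xt \<in> F) \<or> (sx \<in> F \<and> wt \<in> F)" unfolding defs by auto
    have n1: "\<not> (sw \<in> F \<and> wt \<in> F)"
    proof
      assume "sw \<in> F \<and> wt \<in> F"
      then have "{s,w} \<in> F - {e}" "{w,t} \<in> F - {e}" using d unfolding sw_def wt_def by auto
      then have "P3 (F - {e}) s t" using wx by (intro P3I2[of w]) auto
      then show False using F(4) by simp
    qed
    have n2: "\<not> (sx \<in> F \<and> xt \<in> F)"
    proof
      assume "sx \<in> F \<and> xt \<in> F"
      then have "{s,x} \<in> F - {e}" "{x,t} \<in> F - {e}" using d unfolding sx_def xt_def by auto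
      then have "P3 (F - {e}) s t" using wx by (intro P3I2[of x]) auto
      then show False using F(4) by simp
    qed
    have noP: "\<not> P3 (F - {h}) s t" if h: "h \<in> {sw, sx}" "sw \<notin> F - {h}" "sx \<notin> F - {h}" for h
    proof
      assume P: "P3 (F - {h}) s t"
      have "h \<noteq> e" using h(1) d by (elim insertE; simp)
      then have "insert {w,x} (F - {h} - {e}) = F - {h}" using F(3) e_def by auto
      then have "P3 (insert {w,x} (F - {h} - {e})) s t" using P by simp
      from P3_ins[OF wx(2,3,5,6) this] have
        "P3 (F - {h} - {e}) s t \<or> sw \<in> F - {h} - {e} \<or> sx \<in> F - {h} - {e}" unfolding defs by blast
      moreover have "\<not> P3 (F - {h} - {e}) s t"
        using F(4) P3_mono[of "F - {h} - {e}" s t "F - {e}"] by auto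
      ultimately show False using h by auto
    qed
    have nosv: "\<not> P3 (insert sv (F - {h})) s t" if "\<not> P3 (F - {h}) s t" for h
    proof
      assume P: "P3 (insert sv (F - {h})) s t"
      have sub: "insert sv (F - {h}) \<subseteq> E" using F(1) svE' by auto
      have "P3 (insert sv (F - {h}) - {{s,v}}) s t"
      proof (rule sv_irrel[OF _ vt vs P st], intro allI impI)
        fix u assume "{u,v} \<in> insert sv (F - {h})"
        then have "{u,v} \<in> E" by (rule subsetD[OF sub])
        then show "u = s" by (rule nb)
      qed
      moreover have "insert sv (F - {h}) - {{s,v}} \<subseteq> F - {h}" using sv_def by auto
      ultimately have "P3 (F - {h}) s t" by (rule P3_mono)
      then show False using that by simp
    qed
    show ?thesis
    proof (cases "sw \<in> F")
      case True
      have gF: "g F = sw" using True g_def by simp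
      have "xt \<in> F" using pairs n1 True by auto
      moreover have "sx \<notin> F" using n2 \<open>xt \<in> F\<close> by auto
      ultimately have "\<not> P3 (F - {sw}) s t" using noP[of sw] by auto
      then show ?thesis using gF True nosv \<open>xt \<in> F\<close> by auto
    next
      case False
      have gF: "g F = sx" using False g_def by simp
      have "sx \<in> F" "wt \<in> F" using pairs False by auto
      moreover have "xt \<notin> F" using n2 \<open>sx \<in> F\<close> by auto
      moreover have "\<not> P3 (F - {sx}) s t" using noP[of sx] False by auto
      ultimately show ?thesis using gF nosv d by auto
    qed
  qed
  have mp: "\<Phi> F \<subseteq> insert f (E - {e}) \<and> P3 (\<Phi> F) s t \<and> card (\<Phi> F) = card F"
    and inv: "\<Psi> (\<Phi> F) = F"
    if F: "F \<subseteq> E" "P3 F s t" for F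
  proof -
    have ff: "finite F" using fin F(1) by (rule finite_subset[rotated])
    have fF: "f \<notin> F" using fE' F(1) by auto
    have "(\<Phi> F \<subseteq> insert f (E - {e}) \<and> P3 (\<Phi> F) s t \<and> card (\<Phi> F) = card F) \<and> \<Psi> (\<Phi> F) = F"
    proof (cases "e \<in> F")
      case False
      then have eq: "\<Phi> F = F" unfolding \<Phi>_def by simp
      show ?thesis unfolding eq using False F fF by (auto simp: \<Psi>_def)
    next
      case True
      show ?thesis
      proof (cases "P3 (F - {e}) s t \<or> sv \<in> F")
        case c2: True
        have eq: "\<Phi> F = insert f (F - {e})" using True c2 by (simp add: \<Phi>_def)
        have p: "P3 (\<Phi> F) s t"
        proof (cases "P3 (F - {e}) s t")
          case True
          then show ?thesis unfolding eq by (rule P3_mono) auto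
        next
          case False
          then have "sv \<in> F" using c2 by simp
          then show ?thesis unfolding eq using d by (intro Psv) auto
        qed
        have c: "card (\<Phi> F) = card F" unfolding eq using card_swap[OF ff True fF] .
        have sb: "\<Phi> F \<subseteq> insert f (E - {e})" unfolding eq using F(1) by auto
        have i1: "insert e (insert f (F - {e}) - {f}) = F" using True fF by auto
        have "\<Psi> (\<Phi> F) = F" unfolding eq \<Psi>_def i1 using F(2) by simp
        then show ?thesis using p c sb by simp
      next
        case c3: False
        have eq: "\<Phi> F = insert sv (insert f (F - {e} - {g F}))" using True c3 by (simp add: \<Phi>_def)
        have n3: "\<not> P3 (F - {e}) s t" "sv \<notin> F" using c3 by simp_all
        note B0 = br3[OF F True n3]
        note B = B0[THEN conjunct1] B0[THEN conjunct2, THEN conjunct1]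
          B0[THEN conjunct2, THEN conjunct2, THEN conjunct1] B0[THEN conjunct2, THEN conjunct2, THEN conjunct2]
        have gs: "g F = sw \<or> g F = sx" unfolding g_def by (cases "sw \<in> F") simp_all
        have ge: "g F \<noteq> e" using gs d(4,5) by metis
        have gsv1: "g F \<noteq> sv" using gs d(8,9) by metis
        have gsv2: "g F \<noteq> f" using gs d(19,20) by metis
        note gsv = gsv1 gsv2
        have svF: "sv \<notin> F" using c3 by simp
        have p: "P3 (\<Phi> F) s t" unfolding eq by (intro Psv) auto
        have "sv \<in> E - {e}" using svE' d(2) by simp
        then have sb: "\<Phi> F \<subseteq> insert f (E - {e})" unfolding eq using F(1) by auto
        have c1: "card (F - {e} - {g F}) = card F - 2" using True B(1) ge ff by (simp add: card_Diff_singleton)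
        have c2: "card F \<ge> 2"
        proof -
          have "{e, g F} \<subseteq> F" using True B(1) by simp
          then have "card {e, g F} \<le> card F" using ff card_mono by blast
          then show ?thesis using ge by simp
        qed
        define X where "X = F - {e} - {g F}"
        have fX: "finite X" using ff X_def by simp
        have fnX: "f \<notin> X" using fF X_def by simp
        have svnX: "sv \<notin> insert f X" using svF X_def d(3) by simp
        have "card (insert f X) = Suc (card X)" by (rule card_insert_disjoint[OF fX fnX])
        moreover have "card (insert sv (insert f X)) = Suc (card (insert f X))"
          by (rule card_insert_disjoint) (use fX svnX in simp_all)
        ultimately have cc: "card (insert sv (insert f X)) = Suc (Suc (card X))" by simp
        have c1': "card X = card F - 2" using c1 X_def by simp
        have eqX: "\<Phi> F = insert sv (insert f X)" using eq X_def by simp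
        have c: "card (\<Phi> F) = card F" unfolding eqX cc c1' using c2 by simp
        have i1: "insert e (insert sv (insert f (F - {e} - {g F})) - {f}) = insert sv (F - {g F})"
        proof -
          have "insert sv (insert f (F - {e} - {g F})) - {f} = insert sv (F - {e} - {g F})"
            using d(3) fF by auto
          moreover have "insert e (insert sv (F - {e} - {g F})) = insert sv (F - {g F})"
            using True ge by auto
          ultimately show ?thesis by simp
        qed
        have xtR: "xt \<in> insert sv (insert f (F - {e} - {g F})) \<longleftrightarrow> xt \<in> F" using gs d by (elim disjE; simp)
        have i2: "(if xt \<in> F then sw else sx) = g F" using B(3) gs by auto
        have i3: "insert sv (insert f (F - {e} - {g F})) - {sv, f} = F - {e} - {g F}" using svF fF by auto
        have i4: "insert e (insert (g F) (F - {e} - {g F})) = F" using True B(1) by auto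
        have "\<Psi> (\<Phi> F) = F" unfolding eq \<Psi>_def i1 xtR i2 i3 i4 using B(2) by simp
        then show ?thesis using p c sb by simp
      qed
    qed
    then show "\<Phi> F \<subseteq> insert f (E - {e}) \<and> P3 (\<Phi> F) s t \<and> card (\<Phi> F) = card F" "\<Psi> (\<Phi> F) = F"
      by simp_all
  qed
  show ?thesis unfolding f_def[symmetric] e_def[symmetric]
  proof (rule inj_stronger[where \<Phi> = \<Phi> and X = "{sv, f}"])
    show "s \<noteq> t" by fact
    show "finite (insert f (E - {e}))" using fin by simp
    show "\<Phi> F \<subseteq> insert f (E - {e}) \<and> P3 (\<Phi> F) s t \<and> card (\<Phi> F) = card F"
      if "F \<subseteq> E" "P3 F s t" for F using mp[OF that] .
    show "inj_on \<Phi> {F. F \<subseteq> E \<and> P3 F s t}" by (rule inj_on_inverseI[where g = \<Psi>]) (use inv in auto)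
    have "sv \<in> E - {e}" using svE' d(2) by simp
    then show "{sv, f} \<subseteq> insert f (E - {e})" by simp
    show "P3 {sv, f} s t" by (intro Psv) auto
    show "{sv, f} \<notin> \<Phi> ` {F. F \<subseteq> E \<and> P3 F s t}"
    proof
      assume "{sv, f} \<in> \<Phi> ` {F. F \<subseteq> E \<and> P3 F s t}"
      then obtain F where F0: "F \<in> {F. F \<subseteq> E \<and> P3 F s t}" and F3: "{sv, f} = \<Phi> F" by (rule imageE)
      have F: "F \<subseteq> E" "P3 F s t" "\<Phi> F = {sv, f}" using F0 F3 by simp_all
      have fF: "f \<notin> F" using fE' F(1) by auto
      show False
      proof (cases "e \<in> F")
        case False
        then have "\<Phi> F = F" unfolding \<Phi>_def by simp
        then show False using F(3) fF by auto
      next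
        case True
        show False
        proof (cases "P3 (F - {e}) s t \<or> sv \<in> F")
          case c2: True
          have eq: "\<Phi> F = insert f (F - {e})" using True c2 by (simp add: \<Phi>_def)
          have "F \<subseteq> {sv, e}" using F(3) fF unfolding eq by auto
          moreover obtain y where "{y,t} \<in> F" using P3_t[OF F(2)] by blast
          ultimately have "{y,t} = {s,v} \<or> {y,t} = {w,x}" unfolding sv_def e_def by auto
          then show False using st vt wx by (auto simp: doubleton_eq_iff)
        next
          case c3: False
          have eq: "\<Phi> F = insert sv (insert f (F - {e} - {g F}))" using True c3 by (simp add: \<Phi>_def)
          have n3: "\<not> P3 (F - {e}) s t" "sv \<notin> F" using c3 by simp_all
          note B = br3[OF F(1,2) True n3, THEN conjunct2, THEN conjunct2, THEN conjunct2]
          have gs: "g F = sw \<or> g F = sx" unfolding g_def by (cases "sw \<in> F") simp_all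
          have "xt \<in> \<Phi> F \<or> wt \<in> \<Phi> F" unfolding eq using B gs d by (elim disjE; simp)
          then show False using F(3) d by simp
        qed
      qed
    qed
    show "card {sv, f} \<in> {1..card E}" using d m2 by simp
  qed
qed


lemma inT_swap:
  assumes "in_T n m V E s t" "e \<in> E" "{v,t} \<notin> E" "v \<in> V" "v \<noteq> t"
  shows "in_T n m V (insert {v,t} (E - {e})) s t"
proof -
  have tt: "tt_graph V E s t" and cV: "card V = n" and cE: "card E = m" using assms(1) unfolding in_T_def by auto
  have fV: "finite V" and sV: "s \<in> V" and tV: "t \<in> V" and st: "s \<noteq> t"
    and ed: "\<forall>e\<in>E. \<exists>x y. e = {x, y} \<and> x \<noteq> y \<and> x \<in> V \<and> y \<in> V"
    using tt unfolding tt_graph_def by auto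
  have finE: "finite E"
  proof (rule finite_subset[of E "Pow V"])
    show "E \<subseteq> Pow V"
    proof
      fix e assume "e \<in> E"
      then obtain x y where "e = {x,y}" "x \<in> V" "y \<in> V" using ed by metis
      then show "e \<in> Pow V" by simp
    qed
    show "finite (Pow V)" using fV by simp
  qed
  have "\<forall>e'\<in>insert {v,t} (E - {e}). \<exists>x y. e' = {x, y} \<and> x \<noteq> y \<and> x \<in> V \<and> y \<in> V"
  proof
    fix e' assume "e' \<in> insert {v,t} (E - {e})"
    then have "e' = {v,t} \<or> e' \<in> E" by (elim insertE DiffE) simp_all
    then show "\<exists>x y. e' = {x, y} \<and> x \<noteq> y \<and> x \<in> V \<and> y \<in> V"
    proof
      assume "e' = {v,t}"
      then show ?thesis using assms(4,5) tV by (intro exI[of _ v] exI[of _ t]) simp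
    next
      assume "e' \<in> E"
      then show ?thesis using ed by (rule bspec[rotated])
    qed
  qed
  then have "tt_graph V (insert {v,t} (E - {e})) s t"
    unfolding tt_graph_def using fV sV tV st by simp
  moreover have "card (insert {v,t} (E - {e})) = m" using card_swap[OF finE assms(2,3)] cE by simp
  ultimately show ?thesis using cV unfolding in_T_def by simp
qed

theorem lemma7:
  fixes V :: "'a set" and E :: "'a set set" and s t v :: 'a and n m :: nat
  assumes "n \<ge> 5" and "m \<ge> 5"
    and "in_T n m V E s t"
    and "v \<in> V" and "degree E v = 1" and "{s, v} \<in> E"
    and "complete_tt V (E - {{s, v}}) s t"
  shows "\<exists>(VH :: 'a set) EH sH tH. in_T n m VH EH sH tH \<and> d_stronger 3 m EH sH tH E s t"
proof -
  note inT = assms(3)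
  have tt: "tt_graph V E s t" and cV: "card V = n" and cE: "card E = m" using inT unfolding in_T_def by auto
  have fV: "finite V" and sV: "s \<in> V" and tV: "t \<in> V" and st: "s \<noteq> t"
    and ed: "\<forall>e\<in>E. \<exists>x y. e = {x, y} \<and> x \<noteq> y \<and> x \<in> V \<and> y \<in> V"
    using tt unfolding tt_graph_def by auto
  have finE: "finite E"
  proof (rule finite_subset[of E "Pow V"])
    show "E \<subseteq> Pow V"
    proof
      fix e assume "e \<in> E"
      then obtain x y where "e = {x,y}" "x \<in> V" "y \<in> V" using ed by metis
      then show "e \<in> Pow V" by simp
    qed
    show "finite (Pow V)" using fV by simp
  qed
  have edgeV: "a \<in> V" "b \<in> V" if ab: "{a,b} \<in> E" for a b
  proof -
    obtain x y where "{a,b} = {x,y}" "x \<in> V" "y \<in> V" using bspec[OF ed ab] by metis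
    then show "a \<in> V" "b \<in> V" by (auto simp: doubleton_eq_iff)
  qed
  have vs: "v \<noteq> s"
  proof
    assume "v = s"
    obtain x y where "{s,v} = {x,y}" "x \<noteq> y" using bspec[OF ed assms(6)] by metis
    then show False using \<open>v = s\<close> by (auto simp: doubleton_eq_iff)
  qed
  have nbset: "{u. {u,v} \<in> E} = {s}"
  proof -
    have c1: "card {u. {u,v} \<in> E} = 1" using assms(5) unfolding degree_def .
    then obtain a where a: "{u. {u,v} \<in> E} = {a}" by (rule card_1_singletonE)
    have "s \<in> {u. {u,v} \<in> E}" using assms(6) by simp
    then show ?thesis using a by simp
  qed
  have nb: "u = s" if "{u,v} \<in> E" for u
  proof -
    have "u \<in> {u. {u,v} \<in> E}" using that by simp
    then show ?thesis using nbset by simp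
  qed
  define E' where "E' = E - {{s,v}}"
  define C where "C = {x \<in> V. (adj E')\<^sup>*\<^sup>* s x}"
  have tC: "t \<in> C" and cl: "\<And>x y. x \<in> C \<Longrightarrow> y \<in> C \<Longrightarrow> x \<noteq> y \<Longrightarrow> {x,y} \<in> E'"
    using assms(7) unfolding complete_tt_def Let_def C_def E'_def by auto
  have reach: "x \<noteq> v" if "(adj E')\<^sup>*\<^sup>* s x" for x
    using that
  proof (induction rule: rtranclp_induct)
    case base
    then show ?case using vs by simp
  next
    case (step y z)
    show ?case
    proof
      assume "z = v"
      then have "{y,v} \<in> E'" using step(2) unfolding adj_def by simp
      then have "{y,v} \<in> E" "{y,v} \<noteq> {s,v}" unfolding E'_def by auto
      moreover have "y = s" using nb \<open>{y,v} \<in> E\<close> by simp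
      ultimately show False by simp
    qed
  qed
  have vC: "v \<notin> C" using reach C_def by auto
  have vt: "v \<noteq> t" using vC tC by auto
  have fE: "{v,t} \<notin> E"
  proof
    assume "{v,t} \<in> E"
    then have "{t,v} \<in> E" by (simp add: insert_commute)
    then have "t = s" by (rule nb)
    then show False using st by simp
  qed
  have sC: "s \<in> C" using sV C_def by simp
  have E'E: "E' \<subseteq> E" unfolding E'_def by auto
  have clos: "z \<in> C" if "{y,z} \<in> E'" "y \<in> C" for y z
  proof -
    have "adj E' y z" using that(1) unfolding adj_def by simp
    moreover have "(adj E')\<^sup>*\<^sup>* s y" using that(2) C_def by simp
    ultimately have "(adj E')\<^sup>*\<^sup>* s z" by (metis rtranclp.rtrancl_into_rtrancl)
    moreover have "z \<in> V" using edgeV(2) E'E that(1) by blast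
    ultimately show ?thesis using C_def by simp
  qed
  have m2: "2 \<le> card E" using cE assms(2) by simp
  show ?thesis
  proof (cases "\<exists>e\<in>E. e \<noteq> {s,v} \<and> \<not> e \<subseteq> C")
    case True
    then obtain e where eE: "e \<in> E" and esv: "e \<noteq> {s,v}" and eC: "\<not> e \<subseteq> C" by blast
    have irr: "P3 (F - {e}) s t" if F: "F \<subseteq> E" "P3 F s t" for F
    proof -
      have "P3 (F - {{s,v}}) s t"
      proof (rule sv_irrel[OF _ vt vs F(2) st], intro allI impI)
        fix u assume "{u,v} \<in> F"
        then have "{u,v} \<in> E" by (rule subsetD[OF F(1)])
        then show "u = s" by (rule nb)
      qed
      moreover have "z \<in> C" if "{y,z} \<in> F - {{s,v}}" "y \<in> C" for y z
      proof -
        have "{y,z} \<in> E'" using that(1) F(1) unfolding E'_def by auto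
        then show ?thesis using clos that(2) by blast
      qed
      ultimately have "P3 {g \<in> F - {{s,v}}. g \<subseteq> C} s t" using P3_restrict[OF sC tC] by blast
      moreover have "{g \<in> F - {{s,v}}. g \<subseteq> C} \<subseteq> F - {e}" using eC by auto
      ultimately show ?thesis by (rule P3_mono)
    qed
    have "d_stronger 3 (card E) (insert {v,t} (E - {e})) s t E s t"
      by (rule case1[OF st vs vt finE eE assms(6) esv fE irr nb m2])
    moreover have "in_T n m V (insert {v,t} (E - {e})) s t"
      by (rule inT_swap[OF inT eE fE assms(4) vt])
    ultimately show ?thesis using cE by blast
  next
    case False
    then have allC: "e \<subseteq> C" if "e \<in> E" "e \<noteq> {s,v}" for e using that by blast
    have finC: "finite C" using fV C_def by simp
    have sub: "E - {{s,v}} \<subseteq> {B. B \<subseteq> C \<and> card B = 2}"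
    proof
      fix e assume e: "e \<in> E - {{s,v}}"
      then obtain x y where "e = {x,y}" "x \<noteq> y" using bspec[OF ed, of e] by auto
      then have "card e = 2" by simp
      then show "e \<in> {B. B \<subseteq> C \<and> card B = 2}" using allC e by simp
    qed
    have "card (E - {{s,v}}) = m - 1" using cE assms(6) finE by simp
    moreover have "card (E - {{s,v}}) \<le> card {B. B \<subseteq> C \<and> card B = 2}"
      by (rule card_mono[OF _ sub]) (simp add: finC)
    ultimately have "m - 1 \<le> card C choose 2" using n_subsets[OF finC, of 2] by simp
    then have ch: "4 \<le> card C choose 2" using assms(2) by simp
    have c4: "4 \<le> card C"
    proof (rule ccontr)
      assume "\<not> 4 \<le> card C"
      then have "card C \<le> 3" by simp
      then have "card C * (card C - 1) \<le> 3 * 2" by (intro mult_mono) auto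
      then have "card C choose 2 \<le> 3" unfolding choose_two by simp
      then show False using ch by simp
    qed
    have "card (C - {s,t}) = card C - card {s,t}" using sC tC finC by (intro card_Diff_subset) auto
    then have c2: "card (C - {s,t}) \<ge> 2" using c4 st by simp
    then have "C - {s,t} \<noteq> {}" by (metis card.empty not_numeral_le_zero)
    then obtain w where w: "w \<in> C - {s,t}" by blast
    have "card (C - {s,t} - {w}) \<ge> 1" using c2 w finC by simp
    then have "C - {s,t} - {w} \<noteq> {}" by (metis card.empty not_one_le_zero)
    then obtain x where x: "x \<in> C - {s,t} - {w}" by blast
    have wx: "w \<noteq> x" "w \<noteq> s" "w \<noteq> t" "w \<noteq> v" "x \<noteq> s" "x \<noteq> t" "x \<noteq> v"
      using w x vC by auto
    have wC: "w \<in> C" and xC: "x \<in> C" using w x by auto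
    have E1: "{w,x} \<in> E" "{s,w} \<in> E" "{x,t} \<in> E" "{s,x} \<in> E" "{w,t} \<in> E"
      using cl[OF wC xC] cl[OF sC wC] cl[OF xC tC] cl[OF sC xC] cl[OF wC tC] wx E'E by auto
    have "d_stronger 3 (card E) (insert {v,t} (E - {{w,x}})) s t E s t"
      by (rule case2[OF st vs vt finE assms(6) fE nb wx E1 m2])
    moreover have "in_T n m V (insert {v,t} (E - {{w,x}})) s t"
      by (rule inT_swap[OF inT E1(1) fE assms(4) vt])
    ultimately show ?thesis using cE by blast
  qed
qed

end
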